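(* Let $G$ be an infinite discrete countable group, $(X,\mu,G)$ a $G$-measure preserving system and $B\in\mathcal{B}_X^\mu$. If $\{U_g1_B:g\in G\}$ is precompact in $L^2(\mu)$, then $h^*_\mu(G,\{B,B^c\})=0$.
   Context: $(X,\mu,G)$: compact metric space with $G$ acting by homeomorphisms and $G$-invariant Borel probability $\mu$; $\mathcal{B}_X^\mu$ is the $\mu$-completed Borel $\sigma$-algebra; $U_gf(x)=f(gx)$. For a finite partition $\alpha$ into sets of $\mathcal{B}_X^\mu$ and a sequence $\mathcal{A}=(g_n)$ in $G$, $h^{\mathcal{A}}_\mu(G,\alpha)=\limsup_n\frac1nH_\mu(\bigvee_{i=1}^ng_i^{-1}\alpha)$ with $H_\mu(\beta)=-\sum_{C\in\beta}\mu(C)\log\mu(C)$, and $h^*_\mu(G,\alpha)=\sup_{\mathcal{A}}h^{\mathcal{A}}_\mu(G,\alpha)$ over all sequences in $G$. *)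

theory Defs
  imports "HOL-Analysis.Analysis" "HOL-Probability.Probability" "HOL-Algebra.Group"
begin

(* Shannon entropy of a finite partition beta (with 0 log 0 = 0, since ln 0 = 0 in HOL) *)
definition part_entropy :: "'x measure \<Rightarrow> 'x set set \<Rightarrow> real" where
  "part_entropy M beta = - (\<Sum>C\<in>beta. measure M C * ln (measure M C))"

definition join_pre ::
  "'x set \<Rightarrow> ('g \<Rightarrow> 'x \<Rightarrow> 'x) \<Rightarrow> 'x set set \<Rightarrow> (nat \<Rightarrow> 'g) \<Rightarrow> nat \<Rightarrow> 'x set set" where
  "join_pre X act alpha gs n =
     {(\<Inter>i\<in>{1..n}. {x\<in>X. act (gs i) x \<in> c i}) | c. \<forall>i\<in>{1..n}. c i \<in> alpha}"

definition seq_entropy ::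
  "'x measure \<Rightarrow> 'x set \<Rightarrow> ('g \<Rightarrow> 'x \<Rightarrow> 'x) \<Rightarrow> 'x set set \<Rightarrow> (nat \<Rightarrow> 'g) \<Rightarrow> ereal" where
  "seq_entropy M X act alpha gs =
     limsup (\<lambda>n. ereal (part_entropy M (join_pre X act alpha gs n) / real n))"

definition sup_seq_entropy ::
  "('g, 'b) monoid_scheme \<Rightarrow> 'x measure \<Rightarrow> 'x set \<Rightarrow> ('g \<Rightarrow> 'x \<Rightarrow> 'x) \<Rightarrow> 'x set set \<Rightarrow> ereal" where
  "sup_seq_entropy G M X act alpha =
     (SUP gs\<in>{gs. \<forall>n. gs n \<in> carrier G}. seq_entropy M X act alpha gs)"

end

theory Submission
  imports Defs
begin


lemma (in information_space) sf_mem: "A \<in> sets M \<Longrightarrow> simple_function M (\<lambda>x. x\<in>A)"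
  unfolding simple_function_def
proof safe
  assume A: "A \<in> sets M"
  show "finite ((\<lambda>x. x \<in> A) ` space M)" by (rule finite_subset[of _ UNIV]) auto
  fix x assume "x \<in> space M"
  show "(\<lambda>x. x \<in> A) -` {x \<in> A} \<inter> space M \<in> sets M"
  proof (cases "x \<in> A")
    case True
    then have "(\<lambda>x. x \<in> A) -` {x \<in> A} \<inter> space M = A \<inter> space M" by auto
    then show ?thesis using A by auto
  next
    case False
    then have "(\<lambda>x. x \<in> A) -` {x \<in> A} \<inter> space M = space M - A" by auto
    then show ?thesis using A by auto
  qed
qed

lemma (in information_space) sf_list: "set As \<subseteq> sets M \<Longrightarrow> simple_function M (\<lambda>x. map (\<lambda>A. x\<in>A) As)"
proof (induction As)
  case Nil
  then show ?case by (simp add: simple_function_const)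
next
  case (Cons A As)
  have eq: "(\<lambda>x. map (\<lambda>A. x\<in>A) (A#As)) = (\<lambda>(a,l). a#l) \<circ> (\<lambda>x. (x\<in>A, map (\<lambda>A. x\<in>A) As))"
    by (rule ext) simp
  show ?case unfolding eq
    by (rule simple_function_compose, rule simple_function_Pair) (use Cons sf_mem in auto)
qed

lemma (in information_space) H_pair_le:
  assumes "simple_function M X" "simple_function M Y"
  shows "\<H>(\<lambda>x. (X x, Y x)) \<le> \<H>(X) + \<H>(Y)"
  using entropy_chain_rule[OF assms] conditional_entropy_less_eq_entropy[OF assms(2,1)] by simp

lemma (in information_space) H_le_card:
  assumes "simple_function M X"
  shows "\<H>(X) \<le> log b (card (X ` space M))"
  by (rule entropy_le_card[OF simple_distributedI[OF assms measure_nonneg refl]])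

lemma (in information_space) H_list:
  "set As \<subseteq> sets M \<Longrightarrow> \<H>(\<lambda>x. map (\<lambda>A. x\<in>A) As) \<le> sum_list (map (\<lambda>A. \<H>(\<lambda>x. x\<in>A)) As)"
proof (induction As)
  case Nil
  have "\<H>(\<lambda>x. []::bool list) \<le> log b (card ((\<lambda>x. []::bool list) ` space M))"
    by (rule H_le_card) (simp add: simple_function_const)
  also have "card ((\<lambda>x. []::bool list) ` space M) = 1" using not_empty by (simp add: image_constant_conv)
  finally show ?case by simp
next
  case (Cons A As)
  have eq: "(\<lambda>x. map (\<lambda>A. x\<in>A) (A#As)) = (\<lambda>(a,l). a#l) \<circ> (\<lambda>x. (x\<in>A, map (\<lambda>A. x\<in>A) As))"
    by (rule ext) simp
  have sfA: "simple_function M (\<lambda>x. x\<in>A)" using Cons sf_mem by auto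
  have sfL: "simple_function M (\<lambda>x. map (\<lambda>A. x\<in>A) As)" using Cons sf_list by auto
  have "\<H>(\<lambda>x. map (\<lambda>A. x\<in>A) (A#As)) \<le> \<H>(\<lambda>x. (x\<in>A, map (\<lambda>A. x\<in>A) As))"
    unfolding eq by (rule entropy_data_processing, rule simple_function_Pair[OF sfA sfL])
  also have "\<dots> \<le> \<H>(\<lambda>x. x\<in>A) + \<H>(\<lambda>x. map (\<lambda>A. x\<in>A) As)"
    by (rule H_pair_le[OF sfA sfL])
  finally show ?case using Cons by simp
qed

lemma (in information_space) H_bool_ln2:
  assumes b: "b = exp 1" and A: "A \<in> sets M"
  shows "\<H>(\<lambda>x. x\<in>A) \<le> ln 2"
proof -
  have "\<H>(\<lambda>x. x\<in>A) \<le> log b (card ((\<lambda>x. x\<in>A) ` space M))"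
    by (rule H_le_card[OF sf_mem[OF A]])
  also have "\<dots> = ln (card ((\<lambda>x. x\<in>A) ` space M))" using b by (simp add: log_def)
  also have "\<dots> \<le> ln 2"
  proof -
    have "card ((\<lambda>x. x\<in>A) ` space M) \<le> card (UNIV::bool set)" by (rule card_mono) auto
    moreover have "card ((\<lambda>x. x\<in>A) ` space M) > 0" using not_empty by (simp add: card_gt_0_iff)
    ultimately show ?thesis by simp
  qed
  finally show ?thesis .
qed

lemma R1: "0 \<le> (p::real) \<Longrightarrow> - (p * ln p) \<le> 2 * sqrt p"
proof (cases "p = 0")
  case False
  assume p: "0 \<le> p"
  then have pp: "p > 0" using False by simp
  define s where "s = sqrt p"
  have s: "s > 0" "p = s * s" using pp by (auto simp: s_def)
  have "ln p = 2 * ln s" using s by (simp add: ln_mult)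
  moreover have "- ln s \<le> 1/s - 1" using ln_le_minus_one[of "1/s"] s by (simp add: ln_div)
  ultimately have "- (p * ln p) = 2 * s^2 * (0 - ln s)" using s by (simp add: power2_eq_square)
  also have "\<dots> \<le> 2 * s^2 * (1/s - 1)"
    using \<open>- ln s \<le> 1/s - 1\<close> s by (intro mult_left_mono) auto
  also have "\<dots> = 2 * s - 2 * s^2" using s by (simp add: power2_eq_square field_simps)
  also have "\<dots> \<le> 2 * s" by simp
  finally show ?thesis by (simp add: s_def)
qed simp

lemma R2: "0 \<le> (p::real) \<Longrightarrow> p \<le> 1 \<Longrightarrow> - ((1 - p) * ln (1 - p)) \<le> p"
proof (cases "p = 1")
  case False
  assume p: "0 \<le> p" "p \<le> 1"
  then have q: "1 - p > 0" using False by simp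
  have "- ln (1-p) \<le> 1/(1-p) - 1" using ln_le_minus_one[of "1/(1-p)"] q by (simp add: ln_div)
  then have "(1-p) * (- ln (1-p)) \<le> (1-p) * (1/(1-p) - 1)" using q by (intro mult_left_mono) auto
  also have "\<dots> = p" using q by (simp add: field_simps)
  finally show ?thesis by simp
qed simp

lemma (in information_space) H_bool_small:
  assumes b: "b = exp 1" and A: "A \<in> sets M"
  shows "\<H>(\<lambda>x. x\<in>A) \<le> 2 * sqrt (prob A) + prob A"
proof -
  let ?f = "\<lambda>v. prob ((\<lambda>x. x\<in>A) -` {v} \<inter> space M)"
  have "\<H>(\<lambda>x. x\<in>A) = - (\<Sum>v\<in>(\<lambda>x. x\<in>A)`space M. ?f v * log b (?f v))"
    by (rule entropy_simple_distributed[OF simple_distributedI[OF sf_mem[OF A] measure_nonneg refl]])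
  also have "(\<Sum>v\<in>(\<lambda>x. x\<in>A)`space M. ?f v * log b (?f v)) = (\<Sum>v\<in>UNIV. ?f v * log b (?f v))"
  proof (rule sum.mono_neutral_left)
    show "\<forall>v\<in>UNIV - (\<lambda>x. x\<in>A)`space M. ?f v * log b (?f v) = 0"
    proof
      fix v assume "v \<in> UNIV - (\<lambda>x. x\<in>A)`space M"
      then have "(\<lambda>x. x\<in>A) -` {v} \<inter> space M = {}" by auto
      then show "?f v * log b (?f v) = 0" by simp
    qed
  qed auto
  also have "\<dots> = ?f True * ln (?f True) + ?f False * ln (?f False)"
    using b by (simp add: UNIV_bool log_def)
  also have "?f True = prob A" using sets.sets_into_space[OF A] by (simp add: Int_absorb2 vimage_def)
  also have "?f False = 1 - prob A"
  proof -
    have "(\<lambda>x. x\<in>A) -` {False} \<inter> space M = space M - A" by auto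
    then show ?thesis using prob_compl[OF A] by simp
  qed
  finally show ?thesis using R1[of "prob A"] R2[of "prob A"] by simp
qed

lemma R3: "0 \<le> (p::real) \<Longrightarrow> p \<le> 1 \<Longrightarrow> p \<le> sqrt p"
proof -
  assume p: "0 \<le> p" "p \<le> 1"
  have "sqrt p \<le> 1" using p by simp
  have "p = sqrt p * sqrt p" using p by simp
  also have "\<dots> \<le> sqrt p * 1" using \<open>sqrt p \<le> 1\<close> p by (intro mult_left_mono) auto
  finally show ?thesis by simp
qed

lemma sum_list_le_const:
  fixes f :: "'a \<Rightarrow> real" and c :: real
  shows "(\<forall>x\<in>set xs. f x \<le> c) \<Longrightarrow> sum_list (map f xs) \<le> real (length xs) * c"
  by (induction xs) (auto simp: algebra_simps)

lemma (in information_space) main_bound: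
  assumes b: "b = exp 1"
    and Pg: "\<And>i. i \<in> {1..n} \<Longrightarrow> Pg i \<in> sets M" and Ph: "set Ph \<subseteq> sets M"
    and idx: "\<And>i. i \<in> {1..n} \<Longrightarrow> idx i < length Ph"
    and small: "\<And>i. i \<in> {1..n} \<Longrightarrow> prob ((Pg i - Ph ! idx i) \<union> (Ph ! idx i - Pg i)) < e"
    and e: "e \<le> 1"
  shows "\<H>(\<lambda>x. map (\<lambda>i. x \<in> Pg i) [1..<Suc n]) \<le> length Ph * ln 2 + n * (3 * sqrt e)"
proof -
  define D where "D i = (Pg i - Ph ! idx i) \<union> (Ph ! idx i - Pg i)" for i
  define Dl where "Dl = map D [1..<Suc n]"
  define \<Gamma> where "\<Gamma> x = map (\<lambda>A. x\<in>A) Ph" for x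
  define E where "E x = map (\<lambda>A. x\<in>A) Dl" for x
  define \<phi> where "\<phi> = (\<lambda>(\<gamma>::bool list, es::bool list). map (\<lambda>i. (\<gamma> ! idx i) \<noteq> (es ! (i - 1))) [1..<Suc n])"
  have Dm: "D i \<in> sets M" if i: "i \<in> {1..n}" for i
  proof -
    have "Ph ! idx i \<in> sets M" using Ph nth_mem[OF idx[OF i]] by auto
    then show ?thesis using Pg[OF i] by (auto simp: D_def)
  qed
  have Dl: "set Dl \<subseteq> sets M"
    using Dm by (auto simp: Dl_def)
  have eq: "(\<lambda>x. map (\<lambda>i. x \<in> Pg i) [1..<Suc n]) = \<phi> \<circ> (\<lambda>x. (\<Gamma> x, E x))"
  proof (rule ext)
    fix x
    have "x \<in> Pg i \<longleftrightarrow> (\<Gamma> x ! idx i) \<noteq> (E x ! (i - 1))" if i: "i \<in> set [1..<Suc n]" for i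
    proof -
      have i1: "i \<in> {1..n}" using i by auto
      have "\<Gamma> x ! idx i = (x \<in> Ph ! idx i)" using idx[OF i1] by (simp add: \<Gamma>_def)
      moreover have "E x ! (i - 1) = (x \<in> D i)"
      proof -
        have il: "i - 1 < length [1..<Suc n]" using i1 by auto
        have ii: "[1..<Suc n] ! (i-1) = i" using i1 by (subst nth_upt) auto
        have il2: "i - 1 < length (map D [1..<Suc n])" using il by simp
        show ?thesis unfolding E_def Dl_def
          by (simp only: nth_map[OF il2] nth_map[OF il] ii)
      qed
      ultimately show ?thesis by (auto simp: D_def)
    qed
    then show "map (\<lambda>i. x \<in> Pg i) [1..<Suc n] = (\<phi> \<circ> (\<lambda>x. (\<Gamma> x, E x))) x"
      by (simp add: \<phi>_def)
  qed
  have sfG: "simple_function M \<Gamma>" unfolding \<Gamma>_def using sf_list[OF Ph] .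
  have sfE: "simple_function M E" unfolding E_def using sf_list[OF Dl] .
  have "\<H>(\<lambda>x. map (\<lambda>i. x \<in> Pg i) [1..<Suc n]) \<le> \<H>(\<lambda>x. (\<Gamma> x, E x))"
    unfolding eq by (rule entropy_data_processing, rule simple_function_Pair[OF sfG sfE])
  also have "\<dots> \<le> \<H>(\<Gamma>) + \<H>(E)" by (rule H_pair_le[OF sfG sfE])
  also have "\<H>(\<Gamma>) \<le> length Ph * ln 2"
  proof -
    have "\<H>(\<Gamma>) \<le> sum_list (map (\<lambda>A. \<H>(\<lambda>x. x\<in>A)) Ph)"
      unfolding \<Gamma>_def by (rule H_list[OF Ph])
    also have "\<dots> \<le> length Ph * ln 2"
      using sum_list_le_const[of Ph "\<lambda>A. \<H>(\<lambda>x. x\<in>A)" "ln 2"] Ph H_bool_ln2[OF b] by auto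
    finally show ?thesis .
  qed
  also have "\<H>(E) \<le> n * (3 * sqrt e)"
  proof -
    have "\<H>(E) \<le> sum_list (map (\<lambda>A. \<H>(\<lambda>x. x\<in>A)) Dl)"
      unfolding E_def by (rule H_list[OF Dl])
    also have "\<dots> \<le> length Dl * (3 * sqrt e)"
    proof (rule sum_list_le_const, rule ballI)
      fix A assume A: "A \<in> set Dl"
      then have "\<exists>i\<in>{1..n}. A = D i" by (auto simp: Dl_def simp del: upt_Suc)
      then obtain i where i: "i \<in> {1..n}" "A = D i" by blast
      have pA: "prob A < e" using small[OF i(1)] i(2) by (simp add: D_def)
      have "\<H>(\<lambda>x. x\<in>A) \<le> 2 * sqrt (prob A) + prob A"
        using H_bool_small[OF b] A Dl by auto
      also have "sqrt (prob A) \<le> sqrt e" using pA by simp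
      also have "prob A \<le> sqrt e"
      proof -
        have "prob A \<le> sqrt (prob A)" using measure_nonneg[of M A] prob_le_1[of A] by (rule R3)
        also have "\<dots> \<le> sqrt e" using pA by simp
        finally show ?thesis .
      qed
      finally show "\<H>(\<lambda>x. x\<in>A) \<le> 3 * sqrt e" by simp
    qed
    also have "length Dl = n" by (simp add: Dl_def)
    finally show ?thesis .
  qed
  finally show ?thesis by simp
qed

lemma (in information_space) explicit_bound:
  assumes b: "b = exp 1"
    and Pg: "\<And>i. i \<in> {1..n} \<Longrightarrow> Pg i \<in> sets M" and Ph: "set Ph \<subseteq> sets M"
    and idx: "\<And>i. i \<in> {1..n} \<Longrightarrow> idx i < length Ph"
    and small: "\<And>i. i \<in> {1..n} \<Longrightarrow> prob ((Pg i - Ph ! idx i) \<union> (Ph ! idx i - Pg i)) < e"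
    and e: "e \<le> 1"
  defines "Y \<equiv> (\<lambda>x. map (\<lambda>i. x \<in> Pg i) [1..<Suc n])"
  shows "- (\<Sum>v\<in>Y`space M. prob (Y -` {v} \<inter> space M) * ln (prob (Y -` {v} \<inter> space M)))
           \<le> length Ph * ln 2 + n * (3 * sqrt e)"
proof -
  have eqY: "Y = (\<lambda>x. map (\<lambda>A. x\<in>A) (map Pg [1..<Suc n]))" by (simp add: Y_def o_def)
  have sf: "simple_function M Y" unfolding eqY by (rule sf_list) (use Pg in auto)
  have "\<H>(Y) = - (\<Sum>v\<in>Y`space M. prob (Y -` {v} \<inter> space M) * log b (prob (Y -` {v} \<inter> space M)))"
    by (rule entropy_simple_distributed[OF simple_distributedI[OF sf measure_nonneg refl]])
  then have "\<H>(Y) = - (\<Sum>v\<in>Y`space M. prob (Y -` {v} \<inter> space M) * ln (prob (Y -` {v} \<inter> space M)))"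
    using b by (simp add: log_def)
  moreover have "\<H>(Y) \<le> length Ph * ln 2 + n * (3 * sqrt e)"
    unfolding Y_def by (rule main_bound[OF b Pg Ph idx small e])
  ultimately show ?thesis by simp
qed



theorem lemmaB2:
  fixes G :: "('g, 'b) monoid_scheme"
    and act :: "'g \<Rightarrow> 'x::metric_space \<Rightarrow> 'x"
    and X :: "'x set"
    and M :: "'x measure"
    and B :: "'x set"
  assumes grp: "group G"
    and cnt: "countable (carrier G)"
    and inf: "infinite (carrier G)"
    and cpt: "compact X"
    and act_id: "\<forall>x\<in>X. act \<one>\<^bsub>G\<^esub> x = x"
    and act_mult: "\<forall>g\<in>carrier G. \<forall>h\<in>carrier G. \<forall>x\<in>X.
                     act (g \<otimes>\<^bsub>G\<^esub> h) x = act g (act h x)"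
    and act_homeo: "\<forall>g\<in>carrier G. homeomorphism X X (act g) (act (inv\<^bsub>G\<^esub> g))"
    and prob: "prob_space M"
    and borel_M: "sets M = sets (restrict_space borel X)"
    and inv_M: "\<forall>g\<in>carrier G. \<forall>A\<in>sets M. measure M {x\<in>X. act g x \<in> A} = measure M A"
    and B_meas: "B \<in> sets (completion M)"
    and precompact: "\<forall>e>0. \<exists>F. finite F \<and> F \<subseteq> carrier G \<and>
        (\<forall>g\<in>carrier G. \<exists>h\<in>F.
           (LINT x|completion M. (indicator B (act g x) - indicator B (act h x) :: real)^2) < e)"
  shows "sup_seq_entropy G (completion M) X act {B, X - B} = 0"
proof -
  define N where "N = completion M"
  interpret P: prob_space M by (rule prob)
  have probN: "prob_space N" unfolding N_def by (rule P.prob_space_completion)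
  interpret I: information_space N "exp 1"
    unfolding information_space_def information_space_axioms_def using probN by auto
  have spM: "space M = X" using sets_eq_imp_space_eq[OF borel_M] by (simp add: space_restrict_space)
  have spN: "space N = X" by (simp add: N_def spM)
  have BX: "B \<subseteq> X" using sets.sets_into_space[OF B_meas] spN unfolding N_def by auto
  have actX: "act g x \<in> X" if "g \<in> carrier G" "x \<in> X" for g x
    using act_homeo that unfolding homeomorphism_def by blast
  have meas: "act g \<in> M \<rightarrow>\<^sub>M M" if g: "g \<in> carrier G" for g
  proof -
    have cont: "continuous_on X (act g)" using act_homeo g unfolding homeomorphism_def by blast
    have "act g \<in> restrict_space borel X \<rightarrow>\<^sub>M restrict_space borel X"
      by (rule measurable_restrict_space2)
         (use actX g borel_measurable_continuous_on_restrict[OF cont] in \<open>auto simp: space_restrict_space\<close>)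
    then show ?thesis using measurable_cong_sets[OF borel_M borel_M] by simp
  qed
  define P where "P g = {x\<in>X. act g x \<in> B}" for g
  have Pmeas: "P g \<in> sets N" if g: "g \<in> carrier G" for g
  proof -
    obtain S N1 N' where S: "B = S \<union> N1" "N1 \<subseteq> N'" "N' \<in> null_sets M" "S \<in> sets M"
      using sets_completionE[OF B_meas] by metis
    have eq: "P g = (act g -` S \<inter> space M) \<union> (act g -` N1 \<inter> X)"
      using spM S(1) by (auto simp: P_def)
    have "act g -` N' \<inter> space M \<in> sets M" using measurable_sets[OF meas[OF g]] S(3) by auto
    moreover have "measure M (act g -` N' \<inter> space M) = 0"
    proof -
      have "act g -` N' \<inter> space M = {x\<in>X. act g x \<in> N'}" using spM by auto
      then have "measure M (act g -` N' \<inter> space M) = measure M N'"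
        using inv_M g S(3) by auto
      also have "\<dots> = 0" using S(3) by (simp add: measure_def null_setsD1)
      finally show ?thesis .
    qed
    ultimately have null: "act g -` N' \<inter> space M \<in> null_sets M"
      by (simp add: null_sets_def P.emeasure_eq_measure)
    show ?thesis unfolding eq N_def
      by (rule sets_completionI[OF refl _ null]) (use spM S(2) measurable_sets[OF meas[OF g] S(4)] in auto)
  qed
  have integral: "(LINT x|completion M. (indicator B (act g x) - indicator B (act h x) :: real)^2)
     = measure N ((P g - P h) \<union> (P h - P g))" if "g \<in> carrier G" "h \<in> carrier G" for g h
  proof -
    have "(LINT x|N. (indicator B (act g x) - indicator B (act h x) :: real)^2)
      = (LINT x|N. indicator ((P g - P h) \<union> (P h - P g)) x)"
      by (rule Bochner_Integration.integral_cong[OF refl]) (auto simp: spN P_def split: split_indicator)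
    also have "\<dots> = measure N ((P g - P h) \<union> (P h - P g))"
    proof -
      have "((P g - P h) \<union> (P h - P g)) \<inter> space N = (P g - P h) \<union> (P h - P g)"
        using spN by (auto simp: P_def)
      then show ?thesis by simp
    qed
    finally show ?thesis by (simp add: N_def)
  qed
  have ent0: "seq_entropy N X act {B, X - B} gs = 0" if gs: "\<forall>n. gs n \<in> carrier G" for gs
  proof -
    define J where "J n = join_pre X act {B, X - B} gs n" for n
    define Y where "Y n x = map (\<lambda>i. x \<in> P (gs i)) [1..<Suc n]" for n x
    define pe where "pe n = part_entropy N (J n)" for n
    have seq_eq: "seq_entropy N X act {B, X - B} gs = limsup (\<lambda>n. ereal (pe n / real n))"
      by (simp add: seq_entropy_def pe_def J_def)
    have nonneg: "pe n \<ge> 0" for n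
    proof -
      have "measure N C * ln (measure N C) \<le> 0" for C
      proof (cases "measure N C = 0")
        case False
        then have "measure N C > 0" using measure_nonneg[of N C] by linarith
        moreover have "measure N C \<le> 1" by (rule I.prob_le_1)
        ultimately show ?thesis by (intro mult_nonneg_nonpos) auto
      qed simp
      then show ?thesis unfolding pe_def part_entropy_def by (simp add: sum_nonpos)
    qed
    have bridge: "pe n = - (\<Sum>v\<in>Y n ` X. measure N (Y n -` {v} \<inter> X) * ln (measure N (Y n -` {v} \<inter> X)))"
      if n: "n \<ge> 1" for n
    proof -
      define h where "h v = Y n -` {v} \<inter> X" for v
      define f where "f C = measure N C * ln (measure N C)" for C
      have keyY: "Y n y = Y n x \<longleftrightarrow> (\<forall>i\<in>{1..n}. (act (gs i) y \<in> B) = (act (gs i) x \<in> B))"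
        if "x \<in> X" "y \<in> X" for x y
        unfolding Y_def P_def using that by (auto simp: map_eq_conv)
      have hne: "x \<in> h (Y n x)" if "x \<in> X" for x using that by (simp add: h_def)
      have hJ: "h (Y n x) \<in> J n" if x: "x \<in> X" for x
      proof -
        define c where "c i = (if act (gs i) x \<in> B then B else X - B)" for i
        have eqn: "h (Y n x) = (\<Inter>i\<in>{1..n}. {y\<in>X. act (gs i) y \<in> c i})"
        proof (intro equalityI subsetI)
          fix y assume "y \<in> h (Y n x)"
          then have y: "y \<in> X" "Y n y = Y n x" by (auto simp: h_def)
          then have "\<forall>i\<in>{1..n}. (act (gs i) y \<in> B) = (act (gs i) x \<in> B)" using keyY x by blast
          then show "y \<in> (\<Inter>i\<in>{1..n}. {y\<in>X. act (gs i) y \<in> c i})"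
            using y actX gs by (auto simp: c_def)
        next
          fix y assume y: "y \<in> (\<Inter>i\<in>{1..n}. {y\<in>X. act (gs i) y \<in> c i})"
          then have yX: "y \<in> X" using n by auto
          have "\<forall>i\<in>{1..n}. (act (gs i) y \<in> B) = (act (gs i) x \<in> B)"
          proof
            fix i assume i: "i \<in> {1..n}"
            then have "act (gs i) y \<in> c i" using y by auto
            then show "(act (gs i) y \<in> B) = (act (gs i) x \<in> B)" by (auto simp: c_def split: if_splits)
          qed
          then show "y \<in> h (Y n x)" using keyY[OF x yX] yX by (auto simp: h_def)
        qed
        show ?thesis unfolding J_def join_pre_def
          by (rule CollectI, rule exI[where x=c]) (auto simp: eqn c_def)
      qed
      have Jsub: "J n - {{}} \<subseteq> h ` (Y n ` X)"
      proof
        fix C assume C: "C \<in> J n - {{}}"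
        then obtain c where c: "C = (\<Inter>i\<in>{1..n}. {y\<in>X. act (gs i) y \<in> c i})" "\<forall>i\<in>{1..n}. c i \<in> {B, X - B}"
          unfolding J_def join_pre_def by auto
        from C obtain x where xC: "x \<in> C" by auto
        then have x: "x \<in> X" using n c(1) by auto
        have cx: "\<forall>i\<in>{1..n}. act (gs i) x \<in> c i" using xC c(1) by auto
        have iff: "act (gs i) y \<in> c i \<longleftrightarrow> ((act (gs i) y \<in> B) = (act (gs i) x \<in> B))"
          if "i \<in> {1..n}" "y \<in> X" for i y
        proof -
          have ci: "c i = B \<or> c i = X - B" using c(2) that(1) by auto
          have xi: "act (gs i) x \<in> c i" using cx that(1) by auto
          show ?thesis using ci xi actX[OF gs[rule_format] that(2)] by auto
        qed
        have "C = h (Y n x)"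
        proof (intro equalityI subsetI)
          fix y assume y: "y \<in> C"
          then have yX: "y \<in> X" using n c(1) by auto
          have "\<forall>i\<in>{1..n}. (act (gs i) y \<in> B) = (act (gs i) x \<in> B)" using y c(1) iff yX by auto
          then show "y \<in> h (Y n x)" using keyY[OF x yX] yX by (auto simp: h_def)
        next
          fix y assume "y \<in> h (Y n x)"
          then have y: "y \<in> X" "Y n y = Y n x" by (auto simp: h_def)
          then have "\<forall>i\<in>{1..n}. (act (gs i) y \<in> B) = (act (gs i) x \<in> B)" using keyY x by blast
          then show "y \<in> C" using y iff c(1) by auto
        qed
        then show "C \<in> h ` (Y n ` X)" using x by auto
      qed
      have Jeq: "J n - {{}} = h ` (Y n ` X)"
        using Jsub hJ hne by blast
      have inj: "inj_on h (Y n ` X)"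
      proof (rule inj_onI)
        fix v w assume "v \<in> Y n ` X" "w \<in> Y n ` X" "h v = h w"
        then obtain x1 x2 where "x1 \<in> X" "v = Y n x1" "x2 \<in> X" "w = Y n x2" by auto
        then show "v = w" using \<open>h v = h w\<close> hne[of x1] by (auto simp: h_def)
      qed
      have finV: "finite (Y n ` X)"
        by (rule finite_subset[OF _ finite_lists_length_eq[of "UNIV::bool set" n]]) (auto simp: Y_def)
      have finJ: "finite (J n)"
        using finite_subset[of "J n" "insert {} (h ` Y n ` X)"] Jeq finV by blast
      have "sum f (J n) = sum f (J n - {{}})"
        by (rule sum.mono_neutral_right[OF finJ]) (auto simp: f_def)
      also have "\<dots> = sum (f \<circ> h) (Y n ` X)" unfolding Jeq by (rule sum.reindex[OF inj])
      finally show ?thesis unfolding pe_def part_entropy_def by (simp add: f_def h_def o_def)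
    qed
    have bound: "\<exists>L\<ge>0. \<forall>n\<ge>1. pe n \<le> L + n * (d/2)" if d: "d > 0" for d
    proof -
      define e where "e = min 1 ((d/6)^2)"
      have e: "e > 0" "e \<le> 1" using d by (auto simp: e_def)
      have se: "sqrt e \<le> d/6"
      proof -
        have "e \<le> (d/6)^2" unfolding e_def by (rule min.cobounded2)
        then have "sqrt e \<le> sqrt ((d/6)^2)" by (rule real_sqrt_le_mono)
        also have "sqrt ((d/6)^2) = d/6" using d by (simp only: real_sqrt_abs)
        finally show ?thesis .
      qed
      have ex: "\<exists>F. finite F \<and> F \<subseteq> carrier G \<and>
        (\<forall>g\<in>carrier G. \<exists>h\<in>F. (LINT x|completion M. (indicator B (act g x) - indicator B (act h x) :: real)^2) < e)"
        using precompact[rule_format, OF e(1)] .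
      obtain F where F0: "finite F \<and> F \<subseteq> carrier G \<and>
        (\<forall>g\<in>carrier G. \<exists>h\<in>F. (LINT x|completion M. (indicator B (act g x) - indicator B (act h x) :: real)^2) < e)"
        using ex by (rule exE)
      note F = conjunct1[OF F0] conjunct1[OF conjunct2[OF F0]] conjunct2[OF conjunct2[OF F0]]
      obtain fs where fs: "set fs = F" using finite_list[OF F(1)] by blast
      define hs where "hs g = (SOME h. h \<in> F \<and> (LINT x|completion M. (indicator B (act g x) - indicator B (act h x) :: real)^2) < e)" for g
      have hs: "hs g \<in> F \<and> measure N ((P g - P (hs g)) \<union> (P (hs g) - P g)) < e" if g: "g \<in> carrier G" for g
      proof -
        have "hs g \<in> F \<and> (LINT x|completion M. (indicator B (act g x) - indicator B (act (hs g) x) :: real)^2) < e"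
          unfolding hs_def by (rule someI_ex) (use bspec[OF F(3) g] in \<open>simp only: Bex_def\<close>)
        then have h1: "hs g \<in> F" and h2: "(LINT x|completion M. (indicator B (act g x) - indicator B (act (hs g) x) :: real)^2) < e"
          by blast+
        have hc: "hs g \<in> carrier G" using h1 F(2) by blast
        have "measure N ((P g - P (hs g)) \<union> (P (hs g) - P g)) < e"
          using h2 unfolding integral[OF g hc] .
        then show ?thesis using h1 by blast
      qed
      define idx where "idx i = (SOME j. j < length fs \<and> fs ! j = hs (gs i))" for i
      have idx: "idx i < length fs \<and> fs ! idx i = hs (gs i)" for i
      proof -
        have "hs (gs i) \<in> set fs" using hs gs fs by blast
        then have "\<exists>j. j < length fs \<and> fs ! j = hs (gs i)" by (simp add: in_set_conv_nth)
        then show ?thesis unfolding idx_def by (rule someI_ex)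
      qed
      have "pe n \<le> length fs * ln 2 + n * (d/2)" if n: "n \<ge> 1" for n
      proof -
        have "- (\<Sum>v\<in>Y n ` space N. measure N (Y n -` {v} \<inter> space N) * ln (measure N (Y n -` {v} \<inter> space N)))
           \<le> length (map P fs) * ln 2 + n * (3 * sqrt e)"
          unfolding Y_def
        proof (rule I.explicit_bound[where Pg="\<lambda>i. P (gs i)" and idx=idx])
          show "P (gs i) \<in> sets N" for i using Pmeas gs by blast
          show "set (map P fs) \<subseteq> sets N" using Pmeas fs F(2) by auto
          show "idx i < length (map P fs)" for i using idx by simp
          show "measure N ((P (gs i) - map P fs ! idx i) \<union> (map P fs ! idx i - P (gs i))) < e" for i
          proof -
            have "map P fs ! idx i = P (hs (gs i))" using idx[of i] by simp
            then show ?thesis using hs[of "gs i"] gs by simp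
          qed
        qed (use e in auto)
        then have "pe n \<le> length fs * ln 2 + n * (3 * sqrt e)"
          by (simp only: spN length_map bridge[OF n, symmetric])
        also have "\<dots> \<le> length fs * ln 2 + n * (d/2)" using se by (intro add_left_mono mult_left_mono) auto
        finally show ?thesis .
      qed
      then show ?thesis by (intro exI[of _ "length fs * ln 2"]) auto
    qed
    have le: "seq_entropy N X act {B, X - B} gs \<le> 0"
    proof (rule ereal_le_epsilon2)
      fix d :: real assume d: "d > 0"
      obtain L where L: "L \<ge> 0" "\<forall>n\<ge>1. pe n \<le> L + n * (d/2)" using bound[OF d] by blast
      obtain K :: nat where K: "2 * L / d < K" using reals_Archimedean2 by blast
      have "eventually (\<lambda>n. ereal (pe n / real n) \<le> ereal d) sequentially"
      proof (rule eventually_sequentiallyI[of "max 1 K"])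
        fix n :: nat assume n: "max 1 K \<le> n"
        then have n1: "n \<ge> 1" and nK: "K \<le> n" by auto
        have "2 * L / d \<le> n" using K nK by linarith
        then have "2 * L \<le> n * d" using d by (simp add: divide_le_eq)
        moreover have "pe n \<le> L + n * (d/2)" using L(2) n1 by auto
        ultimately have "pe n \<le> n * d" by linarith
        then have "pe n / n \<le> d" using n1 by (simp add: divide_le_eq mult.commute)
        then show "ereal (pe n / real n) \<le> ereal d" by simp
      qed
      then have "limsup (\<lambda>n. ereal (pe n / real n)) \<le> ereal d" by (rule Limsup_bounded)
      then show "seq_entropy N X act {B, X - B} gs \<le> 0 + ereal d" using seq_eq by simp
    qed
    have ge: "0 \<le> seq_entropy N X act {B, X - B} gs"
      unfolding seq_eq
      by (rule le_Limsup) (auto simp: nonneg)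
    show ?thesis using le ge by simp
  qed
  have one: "(\<lambda>n. \<one>\<^bsub>G\<^esub>) \<in> {gs. \<forall>n. gs n \<in> carrier G}" using monoid.one_closed[OF group.is_monoid[OF grp]] by simp
  have "(\<lambda>gs. seq_entropy N X act {B, X - B} gs) ` {gs. \<forall>n. gs n \<in> carrier G} = {0}"
    using ent0 one by auto
  then show ?thesis unfolding sup_seq_entropy_def N_def by simp
qed

end
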